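(* Let $\Delta\in\mathfrak{t}_{\mathrm{loc}}$ and $A\in\mathbb{C}^{2^n\times 2^n}$ satisfy $[\Delta,A]=i\varphi A$ for some $\varphi\in\mathbb{Q}$. Then there exists a rational $\Delta'\in\mathfrak{t}_{\mathrm{loc}}$, i.e. $\Delta'=i\cdot\mathrm{diag}(\mu_1,\dots,\mu_{2^n})$ with all $\mu_k\in\mathbb{Q}$, such that $[\Delta',A]=i\varphi A$.
   Context: $\mathfrak{t}_{\mathrm{loc}}$ is the set of diagonal matrices in the Lie algebra of $SU(2)\otimes\cdots\otimes SU(2)$ ($n$ factors), i.e. all matrices $\sum_{j=1}^n I_2\otimes\cdots\otimes I_2\otimes\mathrm{diag}(i\lambda_j,-i\lambda_j)\otimes I_2\otimes\cdots\otimes I_2$ (the diagonal factor in the $j$-th position) with $\lambda_j\in\mathbb{R}$. $[X,Y]=XY-YX$. *)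

theory Defs
  imports "Jordan_Normal_Form.Matrix"
begin

text \<open>In the Kronecker ordering of the tensor product of n copies of C^2, the j-th
  tensor factor (j = 0..n-1, counted from the left) corresponds to bit (n-1-j)
  of the index k.  The factor diag(i lambda, -i lambda) contributes +i lambda
  if that bit is 0 and -i lambda if it is 1.\<close>

definition tensor_sign :: "nat \<Rightarrow> nat \<Rightarrow> nat \<Rightarrow> real" where
  "tensor_sign n j k = (if (k div 2 ^ (n - 1 - j)) mod 2 = 0 then 1 else -1)"

text \<open>The element sum_j I x .. x diag(i lambda_j, -i lambda_j) x .. x I of t_loc.\<close>
definition tloc_elem :: "nat \<Rightarrow> (nat \<Rightarrow> real) \<Rightarrow> complex mat" where
  "tloc_elem n lam = mat (2 ^ n) (2 ^ n)
     (\<lambda>(r, c). if r = c then \<i> * complex_of_real (\<Sum>j<n. lam j * tensor_sign n j r) else 0)"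

definition t_loc :: "nat \<Rightarrow> complex mat set" where
  "t_loc n = {tloc_elem n lam | lam. True}"

text \<open>i * diag(mu_1, ..., mu_{2^n}) (0-indexed).\<close>
definition i_diag :: "nat \<Rightarrow> (nat \<Rightarrow> real) \<Rightarrow> complex mat" where
  "i_diag n mu = mat (2 ^ n) (2 ^ n)
     (\<lambda>(r, c). if r = c then \<i> * complex_of_real (mu r) else 0)"

definition commutator :: "complex mat \<Rightarrow> complex mat \<Rightarrow> complex mat" where
  "commutator X Y = X * Y - Y * X"

end

theory Submission
  imports Defs
begin

lemma rat_functional: "\<exists>g::real\<Rightarrow>rat. (\<forall>x y. g (x+y) = g x + g y) \<and> (\<forall>q x. g (of_rat q * x) = q * g x) \<and> g 1 = 1"
proof -
  interpret V: vector_space_pair "\<lambda>(r::rat) (x::real). of_rat r * x" "(*) :: rat\<Rightarrow>rat\<Rightarrow>rat"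
    by unfold_locales (auto simp: algebra_simps of_rat_add of_rat_mult)
  have "V.vs1.independent {1::real}" by simp
  from V.linear_independent_extend[OF this, of "\<lambda>_. 1"] obtain g where
    g: "Vector_Spaces.linear (\<lambda>(r::rat) (x::real). of_rat r * x) ((*) :: rat\<Rightarrow>rat\<Rightarrow>rat) g" "g 1 = 1" by auto
  show ?thesis
    apply (rule exI[of _ g])
    using V.linear_add[OF g(1)] V.linear_scale[OF g(1)] g(2) by auto
qed

lemma diag_mult_entry:
  fixes A :: "complex mat" and d :: "nat \<Rightarrow> real"
  assumes A: "A \<in> carrier_mat N N" and r: "r < N" and c: "c < N"
  defines "D \<equiv> mat N N (\<lambda>(r, c). if r = c then \<i> * complex_of_real (d r) else 0)"
  shows "(D * A) $$ (r, c) = \<i> * complex_of_real (d r) * A $$ (r, c)"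
    and "(A * D) $$ (r, c) = \<i> * complex_of_real (d c) * A $$ (r, c)"
proof -
  have "(D * A) $$ (r, c) = (\<Sum>k\<in>{0..<N}. (if r = k then \<i> * complex_of_real (d r) else 0) * A $$ (k, c))"
    using A r c by (simp add: D_def scalar_prod_def)
  also have "\<dots> = \<i> * complex_of_real (d r) * A $$ (r, c)"
    using r by (subst sum.cong[OF refl, where h="\<lambda>k. if r = k then \<i> * complex_of_real (d r) * A $$ (k, c) else 0"]) auto
  finally show "(D * A) $$ (r, c) = \<i> * complex_of_real (d r) * A $$ (r, c)" .
  have "(A * D) $$ (r, c) = (\<Sum>k\<in>{0..<N}. A $$ (r, k) * (if k = c then \<i> * complex_of_real (d k) else 0))"
    using A r c by (simp add: D_def scalar_prod_def)
  also have "\<dots> = \<i> * complex_of_real (d c) * A $$ (r, c)"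
    using c by (subst sum.cong[OF refl, where h="\<lambda>k. if k = c then \<i> * complex_of_real (d c) * A $$ (r, k) else 0"]) (auto simp: mult.commute)
  finally show "(A * D) $$ (r, c) = \<i> * complex_of_real (d c) * A $$ (r, c)" .
qed

lemma diag_comm_iff:
  fixes A :: "complex mat" and d :: "nat \<Rightarrow> real"
  assumes A: "A \<in> carrier_mat N N"
  defines "D \<equiv> mat N N (\<lambda>(r, c). if r = c then \<i> * complex_of_real (d r) else 0)"
  shows "commutator D A = z \<cdot>\<^sub>m A \<longleftrightarrow>
     (\<forall>r<N. \<forall>c<N. \<i> * complex_of_real (d r - d c) * A $$ (r, c) = z * A $$ (r, c))"
proof -
  have e: "commutator D A $$ (r, c) = \<i> * complex_of_real (d r - d c) * A $$ (r, c)"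
    if "r < N" "c < N" for r c
    using diag_mult_entry[OF A that, of d] that A
    by (simp add: commutator_def D_def algebra_simps)
  have dims: "commutator D A \<in> carrier_mat N N" using A unfolding commutator_def D_def
    by (intro minus_carrier_mat mult_carrier_mat) auto
  show ?thesis
  proof
    assume h: "commutator D A = z \<cdot>\<^sub>m A"
    show "\<forall>r<N. \<forall>c<N. \<i> * complex_of_real (d r - d c) * A $$ (r, c) = z * A $$ (r, c)"
    proof (intro allI impI)
      fix r c assume "r < N" "c < N"
      then show "\<i> * complex_of_real (d r - d c) * A $$ (r, c) = z * A $$ (r, c)"
        using e[of r c] h A by (metis carrier_matD index_smult_mat(1))
    qed
  next
    assume h: "\<forall>r<N. \<forall>c<N. \<i> * complex_of_real (d r - d c) * A $$ (r, c) = z * A $$ (r, c)"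
    show "commutator D A = z \<cdot>\<^sub>m A"
      apply (rule eq_matI)
      using dims A e h by auto
  qed
qed

lemma g_sum:
  fixes g :: "real \<Rightarrow> rat"
  assumes add: "\<forall>x y. g (x+y) = g x + g y"
  shows "g (\<Sum>j\<in>S. f j) = (\<Sum>j\<in>S. g (f j))"
proof -
  have g0: "g 0 = 0" using add[rule_format, of 0 0] by simp
  show ?thesis
  proof (induction S rule: infinite_finite_induct)
    case (infinite A) then show ?case using g0 by simp
  next
    case empty then show ?case using g0 by simp
  next
    case (insert x F) then show ?case using add by simp
  qed
qed

lemma tensor_sign_rat: "tensor_sign n j k = of_rat (if (k div 2 ^ (n - 1 - j)) mod 2 = 0 then 1 else -1)"
  by (simp add: tensor_sign_def)

theorem lemma3p6:
  fixes n :: nat and Delta A :: "complex mat" and phi :: real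
  assumes "Delta \<in> t_loc n"
    and "A \<in> carrier_mat (2 ^ n) (2 ^ n)"
    and "phi \<in> \<rat>"
    and "commutator Delta A = (\<i> * complex_of_real phi) \<cdot>\<^sub>m A"
  shows "\<exists>Delta' \<in> t_loc n. (\<exists>mu :: nat \<Rightarrow> real.
           (\<forall>k < 2 ^ n. mu k \<in> \<rat>) \<and> Delta' = i_diag n mu \<and>
           commutator Delta' A = (\<i> * complex_of_real phi) \<cdot>\<^sub>m A)"
proof -
  obtain lam where Dl: "Delta = tloc_elem n lam" using assms(1) unfolding t_loc_def by auto
  obtain g :: "real \<Rightarrow> rat" where add: "\<forall>x y. g (x+y) = g x + g y"
    and sc: "\<forall>q x. g (of_rat q * x) = q * g x" and g1: "g 1 = 1"
    using rat_functional by blast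
  obtain q where q: "phi = of_rat q" using assms(3) Rats_cases by blast
  have gphi: "g phi = q" using sc[rule_format, of q 1] g1 q by simp
  have g0: "g 0 = 0" using add[rule_format, of 0 0] by simp
  have gneg: "g (- x) = - g x" for x using add[rule_format, of x "-x"] g0 by simp
  have gdiff: "g (x - y) = g x - g y" for x y using add[rule_format, of x "-y"] gneg[of y] by simp
  define d where "d lm r = (\<Sum>j<n. lm j * tensor_sign n j r)" for lm :: "nat \<Rightarrow> real" and r
  define lam' where "lam' j = real_of_rat (g (lam j))" for j
  define mu where "mu = d lam'"
  have gd: "real_of_rat (g (d lam r)) = d lam' r" for r
  proof -
    have "g (d lam r) = (\<Sum>j<n. g (lam j * tensor_sign n j r))"
      unfolding d_def by (rule g_sum[OF add])
    also have "\<dots> = (\<Sum>j<n. g (lam j) * (if (r div 2 ^ (n - 1 - j)) mod 2 = 0 then 1 else -1))"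
      apply (rule sum.cong[OF refl])
      apply (subst tensor_sign_rat)
      apply (subst mult.commute)
      apply (subst sc[rule_format])
      by simp
    finally show ?thesis
      by (simp add: d_def lam'_def of_rat_sum of_rat_mult tensor_sign_def if_distrib[of real_of_rat] cong: if_cong)
  qed
  have dlam: "Delta = mat (2^n) (2^n) (\<lambda>(r, c). if r = c then \<i> * complex_of_real (d lam r) else 0)"
    unfolding Dl tloc_elem_def d_def by simp
  have D': "tloc_elem n lam' = mat (2^n) (2^n) (\<lambda>(r, c). if r = c then \<i> * complex_of_real (d lam' r) else 0)"
    unfolding tloc_elem_def d_def by simp
  have h: "\<forall>r<2^n. \<forall>c<2^n. \<i> * complex_of_real (d lam r - d lam c) * A $$ (r, c) = \<i> * complex_of_real phi * A $$ (r, c)"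
    using assms(4) diag_comm_iff[OF assms(2), of "d lam"] dlam by simp
  have h': "\<forall>r<2^n. \<forall>c<2^n. \<i> * complex_of_real (d lam' r - d lam' c) * A $$ (r, c) = \<i> * complex_of_real phi * A $$ (r, c)"
  proof (intro allI impI)
    fix r c :: nat assume rc: "r < 2^n" "c < 2^n"
    show "\<i> * complex_of_real (d lam' r - d lam' c) * A $$ (r, c) = \<i> * complex_of_real phi * A $$ (r, c)"
    proof (cases "A $$ (r, c) = 0")
      case False
      then have "d lam r - d lam c = phi" using h rc by (auto simp del: of_real_diff)
      then have "g (d lam r - d lam c) = q" using gphi by simp
      then have "d lam' r - d lam' c = phi" using gd[of r] gd[of c] q gdiff
        by (metis of_rat_diff)
      then show ?thesis by simp
    qed simp
  qed
  have comm: "commutator (tloc_elem n lam') A = (\<i> * complex_of_real phi) \<cdot>\<^sub>m A"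
    using diag_comm_iff[OF assms(2), of "d lam'"] h' D' by simp
  have rat: "\<forall>k<2^n. mu k \<in> \<rat>"
    unfolding mu_def d_def lam'_def tensor_sign_def by (auto intro!: Rats_sum Rats_mult)
  have eq: "tloc_elem n lam' = i_diag n mu"
    unfolding D' i_diag_def mu_def by simp
  show ?thesis
    using comm rat eq unfolding t_loc_def by blast
qed

end
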